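(* Every nondeterministic constraint logic (NCL) instance that has at least one solution has more than one solution.
   Context: An NCL instance is a 3-regular undirected graph whose edges are colored blue or red, with each vertex incident to either exactly one or exactly three blue edges. A solution is an orientation of its edges such that every vertex has at least one incoming blue edge or at least two incoming red edges. *)

theory Defs
  imports Main
begin

definition cubic_graph :: "'a set \<Rightarrow> 'a set set \<Rightarrow> bool" where
  "cubic_graph V E \<longleftrightarrow> finite V \<and>
     (\<forall>e\<in>E. \<exists>u v. u \<noteq> v \<and> u \<in> V \<and> v \<in> V \<and> e = {u, v}) \<and>
     (\<forall>v\<in>V. card {e\<in>E. v \<in> e} = 3)"

text \<open>An NCL instance: a 3-regular graph whose edges are coloured blue (the
  edges in B) or red (the edges in E - B), every vertex being incident to
  exactly one or exactly three blue edges.\<close>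
definition ncl_instance :: "'a set \<Rightarrow> 'a set set \<Rightarrow> 'a set set \<Rightarrow> bool" where
  "ncl_instance V E B \<longleftrightarrow> cubic_graph V E \<and> B \<subseteq> E \<and>
     (\<forall>v\<in>V. card {e\<in>B. v \<in> e} = 1 \<or> card {e\<in>B. v \<in> e} = 3)"

text \<open>An orientation assigns to every edge its head (the endpoint it points to).\<close>
definition orientation :: "'a set set \<Rightarrow> ('a set \<Rightarrow> 'a) \<Rightarrow> bool" where
  "orientation E h \<longleftrightarrow> (\<forall>e\<in>E. h e \<in> e)"

definition ncl_solution :: "'a set \<Rightarrow> 'a set set \<Rightarrow> 'a set set \<Rightarrow> ('a set \<Rightarrow> 'a) \<Rightarrow> bool" where
  "ncl_solution V E B h \<longleftrightarrow> orientation E h \<and>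
     (\<forall>v\<in>V. (\<exists>e\<in>B. h e = v) \<or> card {e\<in>E - B. h e = v} \<ge> 2)"

end

theory Submission
  imports Defs
begin

definition other :: "'a \<Rightarrow> 'a set \<Rightarrow> 'a" where
  "other x e = (SOME y. y \<in> e \<and> y \<noteq> x)"

lemma other_props:
  assumes "e = {u, w}" "u \<noteq> w" "x \<in> e"
  shows "other x e \<in> e \<and> other x e \<noteq> x \<and> (\<forall>y\<in>e. y \<noteq> x \<longrightarrow> y = other x e)"
proof -
  have ex: "\<exists>y. y \<in> e \<and> y \<noteq> x" using assms by auto
  have "other x e \<in> e \<and> other x e \<noteq> x" unfolding other_def using someI_ex[OF ex] .
  then show ?thesis using assms by auto
qed

lemma card3_filter:
  assumes "a \<noteq> b" "a \<noteq> c" "b \<noteq> c"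
  shows "card {x\<in>{a,b,c}. Q x} = (if Q a then 1 else 0) + (if Q b then 1 else 0) + (if Q c then (1::nat) else 0)"
proof -
  have "{x\<in>{a,b,c}. Q x} = (if Q a then {a} else {}) \<union> (if Q b then {b} else {}) \<union> (if Q c then {c} else {})"
    by auto
  then show ?thesis using assms by (cases "Q a"; cases "Q b"; cases "Q c") auto
qed

lemma sat_mono:
  assumes "\<forall>e'\<in>S. g e' = w \<longrightarrow> g' e' = w" "S \<subseteq> E" "finite E"
    and "(\<exists>e\<in>B\<inter>S. g e = w) \<or> card {e\<in>(E-B)\<inter>S. g e = w} \<ge> 2" "B \<subseteq> E"
  shows "(\<exists>e\<in>B. g' e = w) \<or> card {e\<in>E - B. g' e = w} \<ge> 2"
proof -
  have "{e\<in>(E-B)\<inter>S. g e = w} \<subseteq> {e\<in>E - B. g' e = w}" using assms(1) by auto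
  then have "card {e\<in>(E-B)\<inter>S. g e = w} \<le> card {e\<in>E - B. g' e = w}"
    by (rule card_mono[rotated]) (use assms(3) in auto)
  then show ?thesis using assms by auto
qed

lemma edge2:
  assumes "cubic_graph V E" "e \<in> E"
  shows "\<exists>u w. u \<noteq> w \<and> e = {u, w}"
  using assms unfolding cubic_graph_def by blast

theorem mainTheorem18:
  fixes V :: "'a set" and E B :: "'a set set" and h :: "'a set \<Rightarrow> 'a"
  assumes "ncl_instance V E B"
    and "V \<noteq> {}"
    and "ncl_solution V E B h"
  shows "\<exists>h'. ncl_solution V E B h' \<and> (\<exists>e\<in>E. h' e \<noteq> h e)"
proof -
  have cub: "cubic_graph V E" and BE: "B \<subseteq> E"
    and bl: "\<forall>v\<in>V. card {e\<in>B. v \<in> e} = 1 \<or> card {e\<in>B. v \<in> e} = 3"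
    using assms(1) unfolding ncl_instance_def by auto
  have fV: "finite V" and inc3: "\<forall>v\<in>V. card {e\<in>E. v \<in> e} = 3"
    and Esub: "\<forall>e\<in>E. \<exists>u v. u \<noteq> v \<and> u \<in> V \<and> v \<in> V \<and> e = {u, v}"
    using cub unfolding cubic_graph_def by auto
  have fE: "finite E"
  proof -
    have "E \<subseteq> Pow V"
    proof
      fix e assume "e \<in> E"
      then obtain u w where "u \<in> V" "w \<in> V" "e = {u, w}" using Esub by blast
      then show "e \<in> Pow V" by simp
    qed
    then show ?thesis by (rule finite_subset) (simp add: fV)
  qed
  have ori: "\<forall>e\<in>E. h e \<in> e" and sat: "\<forall>v\<in>V. (\<exists>e\<in>B. h e = v) \<or> card {e\<in>E - B. h e = v} \<ge> 2"
    using assms(3) unfolding ncl_solution_def orientation_def by auto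
  have oth: "other (h e) e \<in> e \<and> other (h e) e \<noteq> h e \<and> (\<forall>y\<in>e. y \<noteq> h e \<longrightarrow> y = other (h e) e)"
    if eE: "e \<in> E" for e
  proof -
    obtain u w where uw: "u \<noteq> w" "e = {u, w}" using edge2[OF cub eE] by blast
    have "h e \<in> e" using ori eE by blast
    then show ?thesis using other_props[OF uw(2) uw(1)] by blast
  qed
  show ?thesis
  proof (cases "\<exists>e\<in>E. ncl_solution V E B (h(e := other (h e) e))")
    case True
    then obtain e where "e \<in> E" "ncl_solution V E B (h(e := other (h e) e))" by blast
    then show ?thesis using oth by (intro exI[of _ "h(e := other (h e) e)"]) auto
  next
    case False
    define hr where "hr = (\<lambda>e. if e \<in> E then other (h e) e else h e)"
    have hrE: "\<And>e. e \<in> E \<Longrightarrow> hr e = other (h e) e" unfolding hr_def by auto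
    have hr_ori: "\<forall>e\<in>E. hr e \<in> e" using oth hrE by auto
    have "\<forall>v\<in>V. (\<exists>e\<in>B. hr e = v) \<or> card {e\<in>E - B. hr e = v} \<ge> 2"
    proof (rule ccontr)
      assume "\<not> ?thesis"
      then obtain v where vV: "v \<in> V" and uns: "\<not> ((\<exists>e\<in>B. hr e = v) \<or> card {e\<in>E - B. hr e = v} \<ge> 2)"
        by blast
      have key: "\<exists>e\<in>E. h e = v \<and> ((\<exists>e'\<in>B\<inter>(E-{e}). h e' = v) \<or> card {e'\<in>(E-B)\<inter>(E-{e}). h e' = v} \<ge> 2)"
      proof -
        have "card {e\<in>E. v \<in> e} = 3" using inc3 vV by blast
        then obtain e1 e2 e3 where I: "{e\<in>E. v \<in> e} = {e1, e2, e3}"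
          and d: "e1 \<noteq> e2" "e1 \<noteq> e3" "e2 \<noteq> e3"
          by (auto simp: card_3_iff)
        have inE: "e1 \<in> E" "e2 \<in> E" "e3 \<in> E" using I by blast+
        have hin: "x \<in> {e1,e2,e3}" if "x \<in> E" "h x = v" for x
          using that ori I by blast
        have hrin: "x \<in> {e1,e2,e3}" if "x \<in> E" "hr x = v" for x
          using that hr_ori I by blast
        have vin: "v \<in> x" if "x \<in> {e1,e2,e3}" for x using that I by blast
        have flipI: "hr x = v \<longleftrightarrow> h x \<noteq> v" if "x \<in> {e1,e2,e3}" for x
        proof -
          have xE: "x \<in> E" using that inE by blast
          show ?thesis using oth[OF xE] hrE[OF xE] vin[OF that] by metis
        qed
        have s1: "{e\<in>E - B. h e = v} = {x\<in>{e1,e2,e3}. x \<notin> B \<and> h x = v}"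
          using hin inE by auto
        have s2: "{e\<in>E - B. hr e = v} = {x\<in>{e1,e2,e3}. x \<notin> B \<and> h x \<noteq> v}"
          using hrin inE flipI by auto
        have s3: "{e'\<in>(E-B)\<inter>(E-{e}). h e' = v} = {x\<in>{e1,e2,e3}. x \<notin> B \<and> x \<noteq> e \<and> h x = v}" for e
          using hin inE by auto
        have s4: "{e\<in>B. v \<in> e} = {x\<in>{e1,e2,e3}. x \<in> B}"
          using I BE by auto
        have b1: "(\<exists>e\<in>B. h e = v) \<longleftrightarrow> (\<exists>x\<in>{e1,e2,e3}. x \<in> B \<and> h x = v)"
          using hin inE BE by auto
        have b2: "(\<exists>e\<in>B. hr e = v) \<longleftrightarrow> (\<exists>x\<in>{e1,e2,e3}. x \<in> B \<and> h x \<noteq> v)"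
          using hrin inE BE flipI[of e1] flipI[of e2] flipI[of e3] by auto
        have b3: "(\<exists>e'\<in>B\<inter>(E-{e}). h e' = v) \<longleftrightarrow> (\<exists>x\<in>{e1,e2,e3}. x \<in> B \<and> x \<noteq> e \<and> h x = v)" for e
          using hin inE BE by auto
        have satv: "(\<exists>e\<in>B. h e = v) \<or> card {e\<in>E - B. h e = v} \<ge> 2" using sat vV by blast
        have blv: "card {e\<in>B. v \<in> e} = 1 \<or> card {e\<in>B. v \<in> e} = 3" using bl vV by blast
        note C = card3_filter[OF d]
        have "\<exists>e\<in>{e1,e2,e3}. h e = v \<and> ((\<exists>x\<in>{e1,e2,e3}. x \<in> B \<and> x \<noteq> e \<and> h x = v) \<or>
                card {x\<in>{e1,e2,e3}. x \<notin> B \<and> x \<noteq> e \<and> h x = v} \<ge> 2)"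
          using satv blv uns unfolding s1 s2 s4 b1 b2 C using d
          by (cases "e1 \<in> B"; cases "e2 \<in> B"; cases "e3 \<in> B"; cases "h e1 = v"; cases "h e2 = v"; cases "h e3 = v"; simp)
        then show ?thesis unfolding s3 b3 using inE by blast
      qed
      then obtain e where eE: "e \<in> E" and hev: "h e = v"
        and rest: "(\<exists>e'\<in>B\<inter>(E-{e}). h e' = v) \<or> card {e'\<in>(E-B)\<inter>(E-{e}). h e' = v} \<ge> 2"
        by blast
      let ?h1 = "h(e := other (h e) e)"
      have "ncl_solution V E B ?h1"
        unfolding ncl_solution_def orientation_def
      proof (intro conjI ballI)
        fix e' assume "e' \<in> E" then show "?h1 e' \<in> e'" using ori oth by auto
      next
        fix w assume wV: "w \<in> V"
        show "(\<exists>e\<in>B. ?h1 e = w) \<or> card {e\<in>E - B. ?h1 e = w} \<ge> 2"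
        proof (cases "w = v")
          case True
          show ?thesis
          proof (rule sat_mono[where S="E-{e}" and g=h])
            show "\<forall>e'\<in>E - {e}. h e' = w \<longrightarrow> ?h1 e' = w" by simp
          qed (use rest True fE BE in blast)+
        next
          case False
          show ?thesis
          proof (rule sat_mono[where S="E" and g=h])
            show "\<forall>e'\<in>E. h e' = w \<longrightarrow> ?h1 e' = w" using False hev by auto
            show "(\<exists>e\<in>B \<inter> E. h e = w) \<or> 2 \<le> card {e \<in> (E - B) \<inter> E. h e = w}"
              using sat wV BE by (metis Int_absorb2 Diff_subset inf.absorb1)
          qed (use fE BE in blast)+
        qed
      qed
      then show False using False eE by blast
    qed
    then have "ncl_solution V E B hr" unfolding ncl_solution_def orientation_def using hr_ori by auto
    moreover obtain v where "v \<in> V" using assms(2) by blast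
    then have "{e\<in>E. v \<in> e} \<noteq> {}" using inc3 by (metis card.empty zero_neq_numeral)
    then obtain e where "e \<in> E" by blast
    then have "hr e \<noteq> h e" using hrE oth by auto
    ultimately show ?thesis using \<open>e \<in> E\<close> by blast
  qed
qed

end
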